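(* Consider the spatial Stark problem $$\ddot x=-\frac{x}{|q|^3},\qquad \ddot y=-\frac{y}{|q|^3},\qquad \ddot z=-\frac{z}{|q|^3}+1,\qquad q=(x,y,z).$$ For every $s\in(0,1)$ there exists exactly one circular orbit with $z\equiv s$. With the angular momentum $L=x\dot y-y\dot x$ held fixed, this circular orbit is stable if and only if $s<\big(\frac13\big)^{3/2}$.
   Context: A circular orbit is a solution with $z$ constant and $x^2+y^2$ a positive constant (uniform circular motion about the $z$-axis). Stability with $L$ fixed refers to the reduced system obtained by fixing $L$ and using parabolic coordinates $x=\xi\eta\cos\phi$, $y=\xi\eta\sin\phi$, $z=\frac12(\xi^2-\eta^2)$, in which a circular orbit is an equilibrium of $(\xi,\eta)$. *)

theory Defs
  imports "HOL-Analysis.Analysis"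
begin

definition stark_solution :: "(real \<Rightarrow> real) \<Rightarrow> (real \<Rightarrow> real) \<Rightarrow> (real \<Rightarrow> real) \<Rightarrow> bool" where
  "stark_solution x y z \<longleftrightarrow>
     (\<exists>vx vy vz. \<forall>t.
        (x t, y t, z t) \<noteq> (0, 0, 0) \<and>
        (x has_real_derivative vx t) (at t) \<and>
        (y has_real_derivative vy t) (at t) \<and>
        (z has_real_derivative vz t) (at t) \<and>
        (vx has_real_derivative - x t / (sqrt ((x t)^2 + (y t)^2 + (z t)^2)) ^ 3) (at t) \<and>
        (vy has_real_derivative - y t / (sqrt ((x t)^2 + (y t)^2 + (z t)^2)) ^ 3) (at t) \<and>
        (vz has_real_derivative - z t / (sqrt ((x t)^2 + (y t)^2 + (z t)^2)) ^ 3 + 1) (at t))"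

definition circular_orbit :: "(real \<Rightarrow> real) \<Rightarrow> (real \<Rightarrow> real) \<Rightarrow> (real \<Rightarrow> real) \<Rightarrow> bool" where
  "circular_orbit x y z \<longleftrightarrow> stark_solution x y z \<and>
     (\<exists>c. \<forall>t. z t = c) \<and> (\<exists>r>0. \<forall>t. (x t)^2 + (y t)^2 = r)"

definition ang_mom :: "(real \<Rightarrow> real) \<Rightarrow> (real \<Rightarrow> real) \<Rightarrow> real \<Rightarrow> real" where
  "ang_mom x y t = x t * deriv y t - y t * deriv x t"

text \<open>Reduced Hamiltonian with L fixed, in parabolic coordinates
  x = xi eta cos phi, y = xi eta sin phi, z = (xi^2 - eta^2)/2, with momenta p_xi, p_eta:
  H = (p_xi^2 + p_eta^2)/(2(xi^2+eta^2)) + L^2/(2 xi^2 eta^2) - 2/(xi^2+eta^2) - (xi^2-eta^2)/2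
  (kinetic energy plus potential -1/|q| - z, |q| = (xi^2+eta^2)/2).\<close>
definition stark_red_H :: "real \<Rightarrow> real \<times> real \<times> real \<times> real \<Rightarrow> real" where
  "stark_red_H L u = (case u of (a, b, pa, pb) \<Rightarrow>
     (pa^2 + pb^2) / (2 * (a^2 + b^2)) + L^2 / (2 * a^2 * b^2)
       - 2 / (a^2 + b^2) - (a^2 - b^2) / 2)"

definition stark_red_field :: "real \<Rightarrow> real \<times> real \<times> real \<times> real \<Rightarrow> real \<times> real \<times> real \<times> real" where
  "stark_red_field L u = (case u of (a, b, pa, pb) \<Rightarrow>
     ( deriv (\<lambda>w. stark_red_H L (a, b, w, pb)) pa,
       deriv (\<lambda>w. stark_red_H L (a, b, pa, w)) pb,
     - deriv (\<lambda>w. stark_red_H L (w, b, pa, pb)) a,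
     - deriv (\<lambda>w. stark_red_H L (a, w, pa, pb)) b))"

definition red_lin_stable :: "real \<Rightarrow> real \<times> real \<times> real \<times> real \<Rightarrow> bool" where
  "red_lin_stable L e \<longleftrightarrow>
     (\<exists>A. (stark_red_field L has_derivative A) (at e) \<and>
        (\<forall>u. (\<forall>t\<ge>0. (u has_vector_derivative A (u t)) (at t within {0..}))
              \<longrightarrow> bounded (u ` {0..})))"

end

theory Submission
  imports Defs
begin

lemma field_eq:
  assumes "a \<noteq> 0" "b \<noteq> 0"
  shows "stark_red_field L (a,b,pa,pb) = (pa/(a^2+b^2), pb/(a^2+b^2),
    (pa^2+pb^2)*a/(a^2+b^2)^2 + L^2/(a^3*b^2) - 4*a/(a^2+b^2)^2 + a,
    (pa^2+pb^2)*b/(a^2+b^2)^2 + L^2/(a^2*b^3) - 4*b/(a^2+b^2)^2 - b)"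
proof -
  have n: "a^2+b^2 \<noteq> 0" "2*a^2+2*b^2 \<noteq> 0" using assms by (simp_all add: sum_power2_eq_zero_iff add_nonneg_eq_0_iff)
  have e1: "(2*a^2+2*b^2)*(2*a^2+2*b^2) = 4*(a^2+b^2)^2" "(a^2+b^2)*(a^2+b^2) = (a^2+b^2)^2" by algebra+
  have e2: "L^2*a/(a^4*b^2) = L^2/(a^3*b^2)" "L^2*b/(a^2*b^4) = L^2/(a^2*b^3)" "L^2 * b / (b^2 * (a^2 * b^2)) = L^2 / (a^2 * b ^ 3)" using assms by (simp_all add: eval_nat_numeral field_simps)
  have e3: "2*a^2+2*b^2 = 2*(a^2+b^2)" by simp
  have e4: "\<And>p. 2*p/(2*a^2+2*b^2) = p/(a^2+b^2)" by (metis e3 mult_divide_mult_cancel_left zero_neq_numeral)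
  have 1: "deriv (\<lambda>w. stark_red_H L (a, b, w, pb)) pa = pa/(a^2+b^2)"
    apply (rule DERIV_imp_deriv)
    unfolding stark_red_H_def prod.case
    apply (auto intro!: derivative_eq_intros simp: n assms)
    apply (simp add: e4)
    done
  have 2: "deriv (\<lambda>w. stark_red_H L (a, b, pa, w)) pb = pb/(a^2+b^2)"
    apply (rule DERIV_imp_deriv)
    unfolding stark_red_H_def prod.case
    apply (auto intro!: derivative_eq_intros simp: n assms)
    apply (simp add: e4)
    done
  have 3: "deriv (\<lambda>w. stark_red_H L (w, b, pa, pb)) a = - ((pa^2+pb^2)*a/(a^2+b^2)^2 + L^2/(a^3*b^2) - 4*a/(a^2+b^2)^2 + a)"
    apply (rule DERIV_imp_deriv)
    unfolding stark_red_H_def prod.case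
    apply (auto intro!: derivative_eq_intros simp: n assms)
    apply (simp add: e1 e2)
    done
  have 4: "deriv (\<lambda>w. stark_red_H L (a, w, pa, pb)) b = - ((pa^2+pb^2)*b/(a^2+b^2)^2 + L^2/(a^2*b^3) - 4*b/(a^2+b^2)^2 - b)"
    apply (rule DERIV_imp_deriv)
    unfolding stark_red_H_def prod.case
    apply (auto intro!: derivative_eq_intros simp: n assms)
    apply (simp add: e1 e2)
    done
  show ?thesis unfolding stark_red_field_def using 1 2 3 4 by simp
qed


definition c11 :: "real \<Rightarrow> real \<Rightarrow> real \<Rightarrow> real" where
  "c11 L a b = -3*L^2/(a^4*b^2) - 4/(a^2+b^2)^2 + 16*a^2/(a^2+b^2)^3 + 1"
definition c12 :: "real \<Rightarrow> real \<Rightarrow> real \<Rightarrow> real" where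
  "c12 L a b = -2*L^2/(a^3*b^3) + 16*a*b/(a^2+b^2)^3"
definition c22 :: "real \<Rightarrow> real \<Rightarrow> real \<Rightarrow> real" where
  "c22 L a b = -3*L^2/(a^2*b^4) - 4/(a^2+b^2)^2 + 16*b^2/(a^2+b^2)^3 - 1"

definition linA :: "real \<Rightarrow> real \<Rightarrow> real \<Rightarrow> real \<times> real \<times> real \<times> real \<Rightarrow> real \<times> real \<times> real \<times> real" where
  "linA L a b h = (fst (snd (snd h)) / (a^2+b^2), snd (snd (snd h)) / (a^2+b^2),
      c11 L a b * fst h + c12 L a b * fst (snd h), c12 L a b * fst h + c22 L a b * fst (snd h))"

lemma field_deriv:
  fixes a b L :: real
  assumes "a > 0" "b > 0"
  shows "(stark_red_field L has_derivative linA L a b) (at (a,b,0,0))"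
proof -
  have a0: "a \<noteq> 0" "b \<noteq> 0" using assms by auto
  have n: "a^2+b^2 \<noteq> 0" "2*a^2+2*b^2 \<noteq> 0" using a0 by (simp_all add: sum_power2_eq_zero_iff add_nonneg_eq_0_iff)
  have d1: "((\<lambda>u. fst (snd (snd u)) / (fst u^2+fst (snd u)^2)) has_derivative (\<lambda>h. fst (snd (snd h)) / (a^2+b^2))) (at (a,b,0,0))"
    by (auto intro!: derivative_eq_intros simp: n a0)
  have d2: "((\<lambda>u. snd (snd (snd u)) / (fst u^2+fst (snd u)^2)) has_derivative (\<lambda>h. snd (snd (snd h)) / (a^2+b^2))) (at (a,b,0,0))"
    by (auto intro!: derivative_eq_intros simp: n a0)
  have d3: "((\<lambda>u. (fst (snd (snd u))^2+(snd (snd (snd u)))^2)*fst u/(fst u^2+fst (snd u)^2)^2 + L^2/(fst u^3*fst (snd u)^2) - 4*fst u/(fst u^2+fst (snd u)^2)^2 + fst u)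
     has_derivative (\<lambda>h. c11 L a b * fst h + c12 L a b * fst (snd h))) (at (a,b,0,0))"
    unfolding c11_def c12_def
    apply (auto intro!: derivative_eq_intros simp: n a0)
    apply (rule ext)
    apply (simp add: divide_simps n a0)
    apply algebra
    done
  have d4: "((\<lambda>u. (fst (snd (snd u))^2+(snd (snd (snd u)))^2)*fst (snd u)/(fst u^2+fst (snd u)^2)^2 + L^2/(fst u^2*fst (snd u)^3) - 4*fst (snd u)/(fst u^2+fst (snd u)^2)^2 - fst (snd u))
     has_derivative (\<lambda>h. c12 L a b * fst h + c22 L a b * fst (snd h))) (at (a,b,0,0))"
    unfolding c22_def c12_def
    apply (auto intro!: derivative_eq_intros simp: n a0)
    apply (rule ext)
    apply (simp add: divide_simps n a0)
    apply algebra
    done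
  have D: "((\<lambda>u. (fst (snd (snd u)) / (fst u^2+fst (snd u)^2), snd (snd (snd u)) / (fst u^2+fst (snd u)^2),
      (fst (snd (snd u))^2+(snd (snd (snd u)))^2)*fst u/(fst u^2+fst (snd u)^2)^2 + L^2/(fst u^3*fst (snd u)^2) - 4*fst u/(fst u^2+fst (snd u)^2)^2 + fst u,
      (fst (snd (snd u))^2+(snd (snd (snd u)))^2)*fst (snd u)/(fst u^2+fst (snd u)^2)^2 + L^2/(fst u^2*fst (snd u)^3) - 4*fst (snd u)/(fst u^2+fst (snd u)^2)^2 - fst (snd u)))
     has_derivative linA L a b) (at (a,b,0,0))"
    unfolding linA_def
    by (intro has_derivative_Pair d1 d2 d3 d4)
  show ?thesis
  proof (rule has_derivative_transform_within_open[OF D, of "{0::real<..} \<times> {0::real<..} \<times> UNIV"])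
    show "open ({0::real<..} \<times> {0::real<..} \<times> (UNIV :: (real \<times> real) set))"
      by (intro open_Times open_UNIV) (simp_all add: open_greaterThan)
    show "(a, b, 0, 0) \<in> {0::real<..} \<times> {0::real<..} \<times> (UNIV :: (real \<times> real) set)" using assms by auto
    fix u :: "real \<times> real \<times> real \<times> real"
    assume "u \<in> {0::real<..} \<times> {0::real<..} \<times> UNIV"
    then obtain x y p q where u: "u = (x,y,p,q)" "x > 0" "y > 0" by (cases u) auto
    show "(fst (snd (snd u)) / (fst u^2+fst (snd u)^2), snd (snd (snd u)) / (fst u^2+fst (snd u)^2),
      (fst (snd (snd u))^2+(snd (snd (snd u)))^2)*fst u/(fst u^2+fst (snd u)^2)^2 + L^2/(fst u^3*fst (snd u)^2) - 4*fst u/(fst u^2+fst (snd u)^2)^2 + fst u,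
      (fst (snd (snd u))^2+(snd (snd (snd u)))^2)*fst (snd u)/(fst u^2+fst (snd u)^2)^2 + L^2/(fst u^2*fst (snd u)^3) - 4*fst (snd u)/(fst u^2+fst (snd u)^2)^2 - fst (snd u))
      = stark_red_field L u"
      using u by (simp add: field_eq)
  qed
qed


lemma vd_fst: "(u has_vector_derivative v) F \<Longrightarrow> ((\<lambda>t. fst (u t)) has_real_derivative fst v) F"
  unfolding has_real_derivative_iff_has_vector_derivative has_vector_derivative_def
  by (drule has_derivative_fst) (simp add: scaleR_conv_of_real)
lemma vd_snd: "(u has_vector_derivative v) F \<Longrightarrow> ((\<lambda>t. snd (u t)) has_vector_derivative snd v) F"
  unfolding has_vector_derivative_def
  by (drule has_derivative_snd) simp

definition Mlin :: "real \<Rightarrow> real \<Rightarrow> real \<Rightarrow> real \<times> real \<times> real \<times> real \<Rightarrow> real \<times> real \<times> real \<times> real" where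
  "Mlin m k1 k2 h = (fst (snd (snd h)) / m, snd (snd (snd h)) / m, - (k1 * fst h), - (k2 * fst (snd h)))"

lemma energy_const:
  fixes a p :: "real \<Rightarrow> real" and m k :: real
  assumes "m > 0"
    and da: "\<And>t. t \<ge> 0 \<Longrightarrow> (a has_real_derivative p t / m) (at t within {0..})"
    and dp: "\<And>t. t \<ge> 0 \<Longrightarrow> (p has_real_derivative - (k * a t)) (at t within {0..})"
  shows "\<And>t. t \<ge> 0 \<Longrightarrow> k * (a t)^2 + (p t)^2 / m = k * (a 0)^2 + (p 0)^2 / m"
proof -
  have "\<exists>c. \<forall>x\<in>{0::real..}. k * (a x)^2 + (p x)^2 / m = c"
  proof (rule has_field_derivative_zero_constant)
    show "convex {0::real..}" by (rule convex_real_interval)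
    fix x :: real assume "x \<in> {0..}"
    then have x: "x \<ge> 0" by simp
    show "((\<lambda>x. k * (a x)^2 + (p x)^2 / m) has_real_derivative 0) (at x within {0..})"
      using da[OF x] dp[OF x] assms(1)
      by (auto intro!: derivative_eq_intros simp: field_simps)
  qed
  then obtain c where "\<forall>x\<in>{0::real..}. k * (a x)^2 + (p x)^2 / m = c" by blast
  then show "\<And>t. t \<ge> 0 \<Longrightarrow> k * (a t)^2 + (p t)^2 / m = k * (a 0)^2 + (p 0)^2 / m" by auto
qed



lemma norm4: "norm (x::real, y::real, z::real, w::real) = sqrt (x^2 + y^2 + z^2 + w^2)"
  by (simp add: norm_Pair add.assoc)

lemma stable_dir:
  assumes m: "m > 0" and k1: "k1 > 0" and k2: "k2 > 0"
    and u: "\<forall>t\<ge>0. (u has_vector_derivative Mlin m k1 k2 (u t)) (at t within {0..})"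
  shows "bounded (u ` {0..})"
proof -
  define a where "a t = fst (u t)" for t
  define b where "b t = fst (snd (u t))" for t
  define p where "p t = fst (snd (snd (u t)))" for t
  define q where "q t = snd (snd (snd (u t)))" for t
  have U: "u t = (a t, b t, p t, q t)" for t by (simp add: a_def b_def p_def q_def)
  have da: "(a has_real_derivative p t / m) (at t within {0..})"
   and db: "(b has_real_derivative q t / m) (at t within {0..})"
   and dp: "(p has_real_derivative - (k1 * a t)) (at t within {0..})"
   and dq: "(q has_real_derivative - (k2 * b t)) (at t within {0..})" if "t \<ge> 0" for t
  proof -
    have D: "(u has_vector_derivative Mlin m k1 k2 (u t)) (at t within {0..})" using u that by auto
    show "(a has_real_derivative p t / m) (at t within {0..})"
      using vd_fst[OF D] unfolding a_def by (simp add: Mlin_def U)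
    show "(b has_real_derivative q t / m) (at t within {0..})"
      using vd_fst[OF vd_snd[OF D]] unfolding b_def by (simp add: Mlin_def U)
    show "(p has_real_derivative - (k1 * a t)) (at t within {0..})"
      using vd_fst[OF vd_snd[OF vd_snd[OF D]]] unfolding p_def by (simp add: Mlin_def U)
    have "((\<lambda>t. snd (snd (snd (u t)))) has_vector_derivative snd (snd (snd (Mlin m k1 k2 (u t))))) (at t within {0..})"
      using vd_snd[OF vd_snd[OF vd_snd[OF D]]] by simp
    then show "(q has_real_derivative - (k2 * b t)) (at t within {0..})"
      unfolding q_def has_real_derivative_iff_has_vector_derivative by (simp add: Mlin_def U)
  qed
  have E1: "k1 * (a t)^2 + (p t)^2 / m = k1 * (a 0)^2 + (p 0)^2 / m" if "t \<ge> 0" for t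
    by (rule energy_const[OF m da dp that])
  have E2: "k2 * (b t)^2 + (q t)^2 / m = k2 * (b 0)^2 + (q 0)^2 / m" if "t \<ge> 0" for t
    by (rule energy_const[OF m db dq that])
  define e1 where "e1 = k1 * (a 0)^2 + (p 0)^2 / m"
  define e2 where "e2 = k2 * (b 0)^2 + (q 0)^2 / m"
  have bnd: "norm (u t) \<le> sqrt (e1 / k1 + m * e1 + e2 / k2 + m * e2)" if "t \<ge> 0" for t
  proof -
    have h1: "k1 * (a t)^2 + (p t)^2 / m = e1" using E1[OF that] e1_def by simp
    have h2: "k2 * (b t)^2 + (q t)^2 / m = e2" using E2[OF that] e2_def by simp
    have pa: "(p t)^2 / m \<ge> 0" "(q t)^2 / m \<ge> 0" using m by auto
    have "k1 * (a t)^2 \<le> e1" using h1 pa by linarith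
    then have A: "(a t)^2 \<le> e1 / k1" using k1 by (simp add: field_simps)
    have "k2 * (b t)^2 \<le> e2" using h2 pa by linarith
    then have B: "(b t)^2 \<le> e2 / k2" using k2 by (simp add: field_simps)
    have "(p t)^2 / m \<le> e1" using h1 k1 by (smt (verit) mult_nonneg_nonneg zero_le_power2)
    then have P: "(p t)^2 \<le> m * e1" using m by (simp add: field_simps)
    have "(q t)^2 / m \<le> e2" using h2 k2 by (smt (verit) mult_nonneg_nonneg zero_le_power2)
    then have Q: "(q t)^2 \<le> m * e2" using m by (simp add: field_simps)
    show ?thesis unfolding U norm4 using A B P Q by (intro real_sqrt_le_mono) linarith
  qed
  show ?thesis unfolding bounded_iff using bnd by auto
qed

lemma unstable_dir:
  assumes m: "m > 0" and k1: "k1 \<le> 0"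
  shows "\<exists>u. (\<forall>t\<ge>0. (u has_vector_derivative Mlin m k1 k2 (u t)) (at t within {0..})) \<and> \<not> bounded (u ` {0..})"
proof (cases "k1 = 0")
  case True
  define u where "u t = (t, 0::real, m, 0::real)" for t :: real
  have "(u has_vector_derivative Mlin m k1 k2 (u t)) (at t within {0..})" for t
    unfolding u_def Mlin_def using m True
    by (auto intro!: derivative_eq_intros simp: zero_prod_def)
  moreover have "\<not> bounded (u ` {0..})"
  proof
    assume "bounded (u ` {0..})"
    then obtain B where B: "\<And>t. t \<ge> 0 \<Longrightarrow> norm (u t) \<le> B" unfolding bounded_iff by auto
    have "norm (max B 0 + 1) \<le> norm (u (max B 0 + 1))" unfolding u_def by (rule norm_fst_le)
    with B[of "max B 0 + 1"] show False by simp
  qed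
  ultimately show ?thesis by blast
next
  case False
  then have k: "k1 < 0" using k1 by simp
  define l where "l = sqrt (- k1 / m)"
  have km: "- k1 / m > 0" using k m by (simp add: divide_neg_pos)
  have l: "l > 0" "m * l^2 = - k1" using km m by (auto simp: l_def)
  define u where "u t = (exp (l * t), 0::real, m * l * exp (l * t), 0::real)" for t :: real
  have "(u has_vector_derivative Mlin m k1 k2 (u t)) (at t within {0..})" for t
  proof -
    have e: "((\<lambda>x. exp (l*x)) has_vector_derivative l*exp(l*t)) (at t within {0..})"
      unfolding has_real_derivative_iff_has_vector_derivative[symmetric]
      by (auto intro!: derivative_eq_intros)
    have e2: "m * l * (l * exp (l * t)) = - (k1 * exp (l * t))"
      using l(2) by (simp add: power2_eq_square algebra_simps) (metis mult.assoc mult_minus_left)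
    show ?thesis
      unfolding u_def Mlin_def using m l e e2
      by (auto intro!: derivative_eq_intros simp: zero_prod_def)
  qed
  moreover have "\<not> bounded (u ` {0..})"
  proof
    assume "bounded (u ` {0..})"
    then obtain B where B: "\<And>t. t \<ge> 0 \<Longrightarrow> norm (u t) \<le> B" unfolding bounded_iff by auto
    define t where "t = (max B 0 + 1) / l"
    have t0: "t \<ge> 0" using l by (simp add: t_def)
    have "1 + l * t \<le> exp (l * t)" by (rule exp_ge_add_one_self)
    also have "\<dots> \<le> norm (u t)" unfolding u_def by (metis norm_fst_le real_norm_def abs_exp_cancel order_refl)
    also have "\<dots> \<le> B" using B t0 by simp
    finally show False using l by (simp add: t_def)
  qed
  ultimately show ?thesis by blast
qed



lemma orbit_facts:
  assumes orb: "circular_orbit x y z" and zs: "\<forall>t. z t = s"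
  shows "\<exists>r N. r > 0 \<and> N > 0 \<and> N^3 = s \<and> r + s^2 = N^2 \<and> (x 0)^2 + (y 0)^2 = r
      \<and> (ang_mom x y 0)^2 * s = r^2
      \<and> range (\<lambda>t. (x t, y t, z t)) = {(a,b,c). a^2 + b^2 = r \<and> c = s}"
proof -
  from orb obtain r where r: "r > 0" "\<And>t. (x t)^2 + (y t)^2 = r"
    unfolding circular_orbit_def by auto
  from orb obtain vx vy vz where sol: "\<And>t. (x t, y t, z t) \<noteq> (0, 0, 0) \<and>
        (x has_real_derivative vx t) (at t) \<and>
        (y has_real_derivative vy t) (at t) \<and>
        (z has_real_derivative vz t) (at t) \<and>
        (vx has_real_derivative - x t / (sqrt ((x t)^2 + (y t)^2 + (z t)^2)) ^ 3) (at t) \<and>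
        (vy has_real_derivative - y t / (sqrt ((x t)^2 + (y t)^2 + (z t)^2)) ^ 3) (at t) \<and>
        (vz has_real_derivative - z t / (sqrt ((x t)^2 + (y t)^2 + (z t)^2)) ^ 3 + 1) (at t)"
    unfolding circular_orbit_def stark_solution_def by metis
  define N where "N = sqrt (r + s^2)"
  have Nt: "sqrt ((x t)^2 + (y t)^2 + (z t)^2) = N" for t using r(2)[of t] zs by (simp add: N_def)
  have dx: "(x has_real_derivative vx t) (at t)" and dy: "(y has_real_derivative vy t) (at t)"
    and dz: "(z has_real_derivative vz t) (at t)"
    and dvx: "(vx has_real_derivative - x t / N^3) (at t)"
    and dvy: "(vy has_real_derivative - y t / N^3) (at t)"
    and dvz: "(vz has_real_derivative - s / N^3 + 1) (at t)" for t
    using sol[of t] Nt[of t] zs by auto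
  have zfun: "z = (\<lambda>_. s)" using zs by auto
  have vz0: "vz t = 0" for t
    using DERIV_unique[OF dz[of t]] zfun by (metis DERIV_const)
  have vzfun: "vz = (\<lambda>_. 0)" using vz0 by auto
  have eqN: "- s / N^3 + 1 = 0"
    using DERIV_unique[OF dvz[of 0]] vzfun by (metis DERIV_const)
  then have N3: "N^3 = s" by (cases "N^3 = 0") (auto simp: field_simps)
  have Npos: "N > 0" unfolding N_def using r(1) by (simp add: add_pos_nonneg)
  have spos: "s > 0" using N3 Npos by (metis zero_less_power)
  have rN: "r + s^2 = N^2" unfolding N_def using r(1) by simp
  have g0: "x t * vx t + y t * vy t = 0" for t
  proof -
    have "((\<lambda>t. (x t)^2 + (y t)^2) has_real_derivative 2 * x t * vx t + 2 * y t * vy t) (at t)"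
      using dx[of t] dy[of t] by (auto intro!: derivative_eq_intros)
    moreover have "(\<lambda>t. (x t)^2 + (y t)^2) = (\<lambda>_. r)" using r(2) by auto
    ultimately have "2 * x t * vx t + 2 * y t * vy t = 0"
      by (metis DERIV_const DERIV_unique)
    then show ?thesis by simp
  qed
  have v2: "(vx t)^2 + (vy t)^2 = r / s" for t
  proof -
    have "((\<lambda>t. x t * vx t + y t * vy t) has_real_derivative
        vx t * vx t + x t * (- x t / N^3) + (vy t * vy t + y t * (- y t / N^3))) (at t)"
      using dx[of t] dy[of t] dvx[of t] dvy[of t] by (auto intro!: derivative_eq_intros)
    moreover have "(\<lambda>t. x t * vx t + y t * vy t) = (\<lambda>_. 0)" using g0 by auto
    ultimately have "vx t * vx t + x t * (- x t / N^3) + (vy t * vy t + y t * (- y t / N^3)) = 0"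
      by (metis DERIV_const DERIV_unique)
    then have "vx t * vx t + vy t * vy t - (x t * x t + y t * y t) / s = 0"
      unfolding N3 by (simp add: algebra_simps add_divide_distrib diff_divide_distrib)
    then have "(vx t)^2 + (vy t)^2 = ((x t)^2 + (y t)^2) / s"
      by (simp add: power2_eq_square)
    then show ?thesis using r(2) by simp
  qed
  define Lf where "Lf t = x t * vy t - y t * vx t" for t
  have Lsq: "(Lf t)^2 * s = r^2" for t
  proof -
    have "(Lf t)^2 + (x t * vx t + y t * vy t)^2 = ((x t)^2 + (y t)^2) * ((vx t)^2 + (vy t)^2)"
      unfolding Lf_def by algebra
    then have "(Lf t)^2 = r * (r / s)" using g0[of t] r(2)[of t] v2[of t] by simp
    then show ?thesis using spos by (simp add: field_simps power2_eq_square)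
  qed
  have am: "ang_mom x y 0 = Lf 0"
    unfolding ang_mom_def Lf_def using DERIV_imp_deriv[OF dx[of 0]] DERIV_imp_deriv[OF dy[of 0]] by simp
  have Lconst: "Lf t = Lf 0" for t
  proof -
    have "\<forall>t. (Lf has_real_derivative 0) (at t)"
    proof
      fix t
      have "(Lf has_real_derivative vx t * vy t + x t * (- y t / N^3) - (vy t * vx t + y t * (- x t / N^3))) (at t)"
        unfolding Lf_def[abs_def]
        using dx[of t] dy[of t] dvx[of t] dvy[of t] by (auto intro!: derivative_eq_intros)
      then show "(Lf has_real_derivative 0) (at t)" by (simp add: algebra_simps)
    qed
    then show ?thesis by (rule DERIV_isconst_all)
  qed
  define c where "c = Lf 0 / r"
  have vxc: "vx t = - c * y t" and vyc: "vy t = c * x t" for t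
  proof -
    have "r * vy t = x t * Lf t + y t * (x t * vx t + y t * vy t)"
      unfolding r(2)[of t, symmetric] Lf_def by algebra
    then have "r * vy t = x t * Lf t" using g0[of t] by simp
    then show "vy t = c * x t" using Lconst[of t] r(1) unfolding c_def by (simp add: field_simps)
    have "r * vx t = - y t * Lf t + x t * (x t * vx t + y t * vy t)"
      unfolding r(2)[of t, symmetric] Lf_def by algebra
    then have "r * vx t = - y t * Lf t" using g0[of t] by simp
    then show "vx t = - c * y t" using Lconst[of t] r(1) unfolding c_def by (simp add: field_simps)
  qed
  have rot: "x t = x 0 * cos (c * t) - y 0 * sin (c * t) \<and> y t = x 0 * sin (c * t) + y 0 * cos (c * t)" for t
  proof -
    define X where "X t = x t * cos (c * t) + y t * sin (c * t)" for t
    define Y where "Y t = - x t * sin (c * t) + y t * cos (c * t)" for t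
    have "\<forall>t. (X has_real_derivative 0) (at t)"
    proof
      fix t
      have "(X has_real_derivative vx t * cos (c * t) + x t * (- sin (c * t) * (c * 1)) + (vy t * sin (c * t) + y t * (cos (c * t) * (c * 1)))) (at t)"
        unfolding X_def[abs_def] using dx[of t] dy[of t] by (auto intro!: derivative_eq_intros)
      then show "(X has_real_derivative 0) (at t)" unfolding vxc vyc by (simp add: algebra_simps)
    qed
    then have X0: "X t = X 0" by (rule DERIV_isconst_all)
    have "\<forall>t. (Y has_real_derivative 0) (at t)"
    proof
      fix t
      have "(Y has_real_derivative - vx t * sin (c * t) - x t * (cos (c * t) * (c * 1)) + (vy t * cos (c * t) + y t * (- sin (c * t) * (c * 1)))) (at t)"
        unfolding Y_def[abs_def] using dx[of t] dy[of t] by (auto intro!: derivative_eq_intros)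
      then show "(Y has_real_derivative 0) (at t)" unfolding vxc vyc by (simp add: algebra_simps)
    qed
    then have Y0: "Y t = Y 0" by (rule DERIV_isconst_all)
    have sc: "(sin (c*t))^2 + (cos (c*t))^2 = 1" by simp
    have "X t * cos (c * t) - Y t * sin (c * t) = x t * ((sin (c*t))^2 + (cos (c*t))^2)" unfolding X_def Y_def
      by algebra
    then have "x t = X t * cos (c * t) - Y t * sin (c * t)" by simp
    moreover have "X t * sin (c * t) + Y t * cos (c * t) = y t * ((sin (c*t))^2 + (cos (c*t))^2)" unfolding X_def Y_def
      by algebra
    then have "y t = X t * sin (c * t) + Y t * cos (c * t)" by simp
    moreover have "X 0 = x 0" "Y 0 = y 0" by (simp_all add: X_def Y_def)
    ultimately show ?thesis using X0 Y0 by metis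
  qed
  have cnz: "c \<noteq> 0"
  proof
    assume "c = 0"
    then have "Lf 0 = 0" using r(1) unfolding c_def by simp
    then show False using Lsq[of 0] r(1) by simp
  qed
  have rng: "range (\<lambda>t. (x t, y t, z t)) = {(a,b,c). a^2 + b^2 = r \<and> c = s}"
  proof
    show "range (\<lambda>t. (x t, y t, z t)) \<subseteq> {(a,b,c). a^2 + b^2 = r \<and> c = s}"
      using r(2) zs by auto
    show "{(a,b,c). a^2 + b^2 = r \<and> c = s} \<subseteq> range (\<lambda>t. (x t, y t, z t))"
    proof
      fix w assume "w \<in> {(a,b,c). a^2 + b^2 = r \<and> c = s}"
      then obtain a b where w: "w = (a, b, s)" and ab: "a^2 + b^2 = r" by auto
      define p where "p = (a * x 0 + b * y 0) / r"
      define q where "q = (b * x 0 - a * y 0) / r"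
      have "(a * x 0 + b * y 0)^2 + (b * x 0 - a * y 0)^2 = (a^2 + b^2) * ((x 0)^2 + (y 0)^2)" by algebra
      then have "(a * x 0 + b * y 0)^2 + (b * x 0 - a * y 0)^2 = r^2" using ab r(2)[of 0] by (simp add: power2_eq_square)
      moreover have "p^2 + q^2 = ((a * x 0 + b * y 0)^2 + (b * x 0 - a * y 0)^2) / r^2"
        unfolding p_def q_def by (simp only: power_divide) (rule add_divide_distrib[symmetric])
      ultimately have "p^2 + q^2 = 1" using r(1) by simp
      then obtain th where th: "p = cos th" "q = sin th" by (rule sincos_total_2pi)
      define t where "t = th / c"
      have ct: "c * t = th" using cnz by (simp add: t_def)
      have "x 0 * p - y 0 * q = a * ((x 0)^2 + (y 0)^2) / r" using r(1) unfolding p_def q_def by (simp add: field_simps power2_eq_square)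
      then have xa: "x t = a" using rot[of t] ct th r(1) r(2)[of 0] by simp
      have "x 0 * q + y 0 * p = b * ((x 0)^2 + (y 0)^2) / r" using r(1) unfolding p_def q_def by (simp add: field_simps power2_eq_square)
      then have yb: "y t = b" using rot[of t] ct th r(1) r(2)[of 0] by (simp add: algebra_simps)
      show "w \<in> range (\<lambda>t. (x t, y t, z t))" using xa yb zs w by (auto intro!: image_eqI[of _ _ t])
    qed
  qed
  show ?thesis
    using r(1) Npos N3 rN r(2)[of 0] Lsq[of 0] am rng by (intro exI[of _ r] exI[of _ N]) auto
qed


lemma existence:
  fixes s :: real
  assumes s0: "0 < s" and s1: "s < 1"
  shows "\<exists>x y z. circular_orbit x y z \<and> (\<forall>t. z t = s)"
proof -
  define N where "N = s powr (1/3)"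
  have Npos: "N > 0" using s0 by (simp add: N_def)
  have N3: "N^3 = s"
  proof -
    have "N^3 = s powr ((1/3) * real 3)" unfolding N_def using s0
      by (simp add: powr_realpow[symmetric] powr_powr del: of_nat_numeral)
    then show ?thesis using s0 by simp
  qed
  have Ns: "N > s"
  proof (rule ccontr)
    assume "\<not> N > s"
    then have "N^3 \<le> s^3" using Npos by (intro power_mono) auto
    moreover have "s^3 < s" using s0 s1 by (simp add: power3_eq_cube) (metis mult_less_cancel_left_pos mult_less_le_imp_less mult_1_right mult.assoc less_imp_le less_le_not_le mult_strict_mono s0 s1 mult_1_left order_less_le_trans)
    ultimately show False using N3 by simp
  qed
  define R where "R = sqrt (N^2 - s^2)"
  have R2: "R^2 + s^2 = N^2" unfolding R_def using Ns s0
    by (simp add: power_strict_mono less_imp_le)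
  have Rpos: "R > 0" unfolding R_def using Ns s0 by (simp add: power_strict_mono)
  define w where "w = 1 / sqrt s"
  have w2: "w^2 = 1/s" using s0 by (simp add: w_def power_divide)
  define x where "x t = R * cos (w * t)" for t
  define y where "y t = R * sin (w * t)" for t
  define z where "z t = s" for t :: real
  have nrm: "sqrt ((x t)^2 + (y t)^2 + (z t)^2) = N" for t
  proof -
    have "(x t)^2 + (y t)^2 = R^2 * ((cos (w*t))^2 + (sin (w*t))^2)" unfolding x_def y_def by algebra
    then have "(x t)^2 + (y t)^2 + (z t)^2 = N^2" using R2 by (simp add: z_def)
    then show ?thesis using Npos by simp
  qed
  have sol: "stark_solution x y z"
    unfolding stark_solution_def
  proof (intro exI allI conjI)
    fix t
    show "(x t, y t, z t) \<noteq> (0, 0, 0)" using s0 by (simp add: z_def)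
    show "(x has_real_derivative - R * sin (w * t) * w) (at t)"
      unfolding x_def[abs_def] by (auto intro!: derivative_eq_intros)
    show "(y has_real_derivative R * cos (w * t) * w) (at t)"
      unfolding y_def[abs_def] by (auto intro!: derivative_eq_intros)
    show "(z has_real_derivative 0) (at t)"
      unfolding z_def[abs_def] by (auto intro!: derivative_eq_intros)
    show "((\<lambda>t. - R * sin (w * t) * w) has_real_derivative - x t / (sqrt ((x t)^2 + (y t)^2 + (z t)^2)) ^ 3) (at t)"
      unfolding nrm N3
      by (auto intro!: derivative_eq_intros simp: x_def) (use w2 s0 in \<open>simp add: power2_eq_square field_simps\<close>)
    show "((\<lambda>t. R * cos (w * t) * w) has_real_derivative - y t / (sqrt ((x t)^2 + (y t)^2 + (z t)^2)) ^ 3) (at t)"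
      unfolding nrm N3
      by (auto intro!: derivative_eq_intros simp: y_def) (use w2 s0 in \<open>simp add: power2_eq_square field_simps\<close>)
    show "((\<lambda>t. 0) has_real_derivative - z t / (sqrt ((x t)^2 + (y t)^2 + (z t)^2)) ^ 3 + 1) (at t)"
      unfolding nrm N3 using s0 by (simp add: z_def)
  qed
  have "circular_orbit x y z"
    unfolding circular_orbit_def
  proof (intro conjI sol)
    show "\<exists>c. \<forall>t. z t = c" by (auto simp: z_def)
    show "\<exists>r>0. \<forall>t. (x t)^2 + (y t)^2 = r"
    proof (intro exI[of _ "R^2"] conjI allI)
      show "R^2 > 0" using Rpos by simp
      fix t
      have "(x t)^2 + (y t)^2 = R^2 * ((cos (w*t))^2 + (sin (w*t))^2)" unfolding x_def y_def by algebra
      then show "(x t)^2 + (y t)^2 = R^2" by simp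
    qed
  qed
  moreover have "\<forall>t. z t = s" by (simp add: z_def)
  ultimately show ?thesis by blast
qed



lemma powr_cond:
  fixes s N :: real
  assumes "N > 0" "N^3 = s"
  shows "s < (1/3) powr (3/2) \<longleftrightarrow> N > 3 * s"
proof -
  have s0: "s > 0" using assms by (metis zero_less_power)
  have p: "(1/3::real) powr (3/2) = sqrt (1/27)"
  proof -
    have a: "(1/3::real) powr (real 3) = (1/3)^3" by (rule powr_realpow) simp
    have "(1/3::real) powr (3/2) = ((1/3) powr (real 3)) powr (1/2)" unfolding powr_powr by simp
    also have "\<dots> = ((1/3)^3) powr (1/2)" unfolding a ..
    also have "\<dots> = sqrt (1/27)" by (simp add: powr_half_sqrt power_divide)
    finally show ?thesis .
  qed
  have "s < sqrt (1/27) \<longleftrightarrow> s^2 < 1/27"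
    using s0 by (metis abs_of_pos real_less_rsqrt real_sqrt_abs real_sqrt_less_iff)
  also have "s^2 = (N^2)^3" using assms(2) by (metis power_mult mult.commute)
  also have "(N^2)^3 < 1/27 \<longleftrightarrow> N^2 < 1/3"
  proof -
    have "(N^2)^3 < (1/3)^3 \<longleftrightarrow> N^2 < 1/3"
      by (meson power_strict_mono power_less_imp_less_base zero_le_power2 zero_less_numeral less_le_trans zero_le_divide_iff zero_le_one zero_le_numeral)
    then show ?thesis by (simp add: power_divide)
  qed
  also have "N^2 < 1/3 \<longleftrightarrow> N > 3 * s"
  proof -
    have e: "3 * s = N * (3 * N^2)" using assms(2) by (simp add: power3_eq_cube power2_eq_square)
    have "N > 3 * s \<longleftrightarrow> N * 1 > N * (3 * N^2)" unfolding e by simp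
    also have "\<dots> \<longleftrightarrow> 1 > 3 * N^2" using assms(1) by (rule mult_less_cancel_left_pos)
    finally show ?thesis by linarith
  qed
  finally show ?thesis using p by simp
qed



lemma coeffs:
  fixes \<xi> \<eta> L s N :: real
  assumes xp: "\<xi> > 0" and ep: "\<eta> > 0" and sdef: "(\<xi>^2 - \<eta>^2) / 2 = s" and Ndef: "N = (\<xi>^2 + \<eta>^2) / 2"
    and N3: "N^3 = s" and L2: "L^2 * s = \<xi>^4 * \<eta>^4"
  shows "c12 L \<xi> \<eta> = 0" "c11 L \<xi> \<eta> = (6 * s - 2 * N) / s" "c22 L \<xi> \<eta> = - (2 * N + 6 * s) / s"
proof -
  have Np: "N > 0" unfolding Ndef using xp ep by (simp add: add_pos_pos)
  have s0: "s > 0" using N3 Np by (metis zero_less_power)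
  have L2': "L^2 = \<xi>^4 * \<eta>^4 / s" using L2 s0 by (simp add: field_simps)
  have nN: "\<xi>^2 + \<eta>^2 = 2 * N" using Ndef by simp
  have n3: "(\<xi>^2 + \<eta>^2)^3 = 8 * s" unfolding nN N3[symmetric] by (simp add: power_mult_distrib)
  have n2: "(\<xi>^2 + \<eta>^2)^2 = 4 * N^2" unfolding nN by (simp add: power_mult_distrib)
  have iN: "4 / (4 * N^2) = N / s" using N3 Np s0 by (simp add: field_simps power3_eq_cube power2_eq_square)
  have x2: "\<xi>^2 = N + s" and e2: "\<eta>^2 = N - s" using sdef Ndef by (simp_all add: field_simps)
  have t1: "3 * L^2 / (\<xi>^4 * \<eta>^2) = 3 * \<eta>^2 / s" unfolding L2' using xp ep s0
    by (simp add: field_simps power2_eq_square eval_nat_numeral)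
  have t1': "3 * L^2 / (\<xi>^2 * \<eta>^4) = 3 * \<xi>^2 / s" unfolding L2' using xp ep s0
    by (simp add: field_simps power2_eq_square eval_nat_numeral)
  have t2: "2 * L^2 / (\<xi>^3 * \<eta>^3) = 2 * \<xi> * \<eta> / s" unfolding L2' using xp ep s0
    by (simp add: field_simps power2_eq_square eval_nat_numeral)
  show "c12 L \<xi> \<eta> = 0" unfolding c12_def n3
    using t2 s0 by (simp add: field_simps)
  have "c11 L \<xi> \<eta> = - (3 * \<eta>^2 / s) - N / s + 16 * \<xi>^2 / (8 * s) + 1"
    unfolding c11_def n3 n2 using t1 iN by simp
  also have "\<dots> = (6 * s - 2 * N) / s" unfolding x2 e2 using s0 by (simp add: field_simps)
  finally show "c11 L \<xi> \<eta> = (6 * s - 2 * N) / s" .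
  have "c22 L \<xi> \<eta> = - (3 * \<xi>^2 / s) - N / s + 16 * \<eta>^2 / (8 * s) - 1"
    unfolding c22_def n3 n2 using t1' iN by simp
  also have "\<dots> = - (2 * N + 6 * s) / s" unfolding x2 e2 using s0 by (simp add: field_simps)
  finally show "c22 L \<xi> \<eta> = - (2 * N + 6 * s) / s" .
qed



lemma Mlin_iff:
  assumes m: "m > 0" and k2: "k2 > 0"
  shows "(\<forall>u. (\<forall>t\<ge>0. (u has_vector_derivative Mlin m k1 k2 (u t)) (at t within {0..})) \<longrightarrow> bounded (u ` {0..}))
     \<longleftrightarrow> k1 > 0"
proof
  assume H: "\<forall>u. (\<forall>t\<ge>0. (u has_vector_derivative Mlin m k1 k2 (u t)) (at t within {0..})) \<longrightarrow> bounded (u ` {0..})"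
  show "k1 > 0"
  proof (rule ccontr)
    assume "\<not> k1 > 0"
    then obtain u where "\<forall>t\<ge>0. (u has_vector_derivative Mlin m k1 k2 (u t)) (at t within {0..})" "\<not> bounded (u ` {0..})"
      using unstable_dir[OF m, of k1 k2] by auto
    with H show False by blast
  qed
next
  assume "k1 > 0"
  then show "\<forall>u. (\<forall>t\<ge>0. (u has_vector_derivative Mlin m k1 k2 (u t)) (at t within {0..})) \<longrightarrow> bounded (u ` {0..})"
    using stable_dir[OF m _ k2] by blast
qed

theorem proposition5p5:
  fixes s :: real
  assumes "0 < s" and "s < 1"
  shows "(\<exists>x y z. circular_orbit x y z \<and> (\<forall>t. z t = s))
    \<and> (\<forall>x y z x' y' z'. circular_orbit x y z \<and> (\<forall>t. z t = s)
          \<and> circular_orbit x' y' z' \<and> (\<forall>t. z' t = s)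
          \<longrightarrow> range (\<lambda>t. (x t, y t, z t)) = range (\<lambda>t. (x' t, y' t, z' t)))
    \<and> (\<forall>x y z \<xi> \<eta>. circular_orbit x y z \<and> (\<forall>t. z t = s)
          \<and> \<xi> > 0 \<and> \<eta> > 0 \<and> \<xi> * \<eta> = sqrt ((x 0)^2 + (y 0)^2) \<and> (\<xi>^2 - \<eta>^2) / 2 = s
          \<longrightarrow> (red_lin_stable (ang_mom x y 0) (\<xi>, \<eta>, 0, 0) \<longleftrightarrow> s < (1/3) powr (3/2)))"
proof (intro conjI allI impI)
  show "\<exists>x y z. circular_orbit x y z \<and> (\<forall>t. z t = s)" using existence[OF assms] .
next
  fix x y z x' y' z' :: "real \<Rightarrow> real"
  assume H: "circular_orbit x y z \<and> (\<forall>t. z t = s) \<and> circular_orbit x' y' z' \<and> (\<forall>t. z' t = s)"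
  obtain r N where A: "r > 0" "N > 0" "N^3 = s" "r + s^2 = N^2"
      "range (\<lambda>t. (x t, y t, z t)) = {(a,b,c). a^2 + b^2 = r \<and> c = s}"
    using orbit_facts[of x y z s] H by blast
  obtain r' N' where B: "r' > 0" "N' > 0" "N'^3 = s" "r' + s^2 = N'^2"
      "range (\<lambda>t. (x' t, y' t, z' t)) = {(a,b,c). a^2 + b^2 = r' \<and> c = s}"
    using orbit_facts[of x' y' z' s] H by blast
  have "N = N'" using A(2,3) B(2,3) by (metis less_imp_le power_eq_imp_eq_base zero_less_numeral)
  then have "r = r'" using A(4) B(4) by simp
  then show "range (\<lambda>t. (x t, y t, z t)) = range (\<lambda>t. (x' t, y' t, z' t))" using A(5) B(5) by simp
next
  fix x y z :: "real \<Rightarrow> real" and \<xi> \<eta> :: real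
  assume H: "circular_orbit x y z \<and> (\<forall>t. z t = s)
          \<and> \<xi> > 0 \<and> \<eta> > 0 \<and> \<xi> * \<eta> = sqrt ((x 0)^2 + (y 0)^2) \<and> (\<xi>^2 - \<eta>^2) / 2 = s"
  then have xp: "\<xi> > 0" and ep: "\<eta> > 0" and xe: "\<xi> * \<eta> = sqrt ((x 0)^2 + (y 0)^2)"
    and sdef: "(\<xi>^2 - \<eta>^2) / 2 = s" by auto
  obtain r N where A: "r > 0" "N > 0" "N^3 = s" "r + s^2 = N^2" "(x 0)^2 + (y 0)^2 = r"
      "(ang_mom x y 0)^2 * s = r^2"
    using orbit_facts[of x y z s] H by blast
  define L where "L = ang_mom x y 0"
  have r: "r = \<xi>^2 * \<eta>^2" using xe A(5) A(1)
    by (metis less_imp_le power_mult_distrib real_sqrt_pow2)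
  have "N^2 = ((\<xi>^2 + \<eta>^2) / 2)^2" using A(4) unfolding r sdef[symmetric]
    by (simp add: power2_eq_square field_simps)
  then have Ndef: "N = (\<xi>^2 + \<eta>^2) / 2" using A(2) xp ep
    by (metis add_pos_pos half_gt_zero less_imp_le power2_eq_iff_nonneg zero_less_power)
  have L2: "L^2 * s = \<xi>^4 * \<eta>^4" using A(6) unfolding L_def r by (simp add: power_mult_distrib flip: power_mult)
  note cf = coeffs[OF xp ep sdef Ndef A(3) L2]
  define m where "m = \<xi>^2 + \<eta>^2"
  define k1 where "k1 = (2 * N - 6 * s) / s"
  define k2 where "k2 = (2 * N + 6 * s) / s"
  have m0: "m > 0" unfolding m_def using xp ep by (simp add: add_pos_pos)
  have k20: "k2 > 0" unfolding k2_def using A(2) assms(1) by simp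
  have lin: "linA L \<xi> \<eta> = Mlin m k1 k2"
    unfolding linA_def Mlin_def cf m_def k1_def k2_def using assms(1) by (intro ext) (simp add: field_simps)
  have D: "(stark_red_field L has_derivative Mlin m k1 k2) (at (\<xi>, \<eta>, 0, 0))"
    using field_deriv[OF xp ep, of L] lin by simp
  have "red_lin_stable L (\<xi>, \<eta>, 0, 0) \<longleftrightarrow>
     (\<forall>u. (\<forall>t\<ge>0. (u has_vector_derivative Mlin m k1 k2 (u t)) (at t within {0..})) \<longrightarrow> bounded (u ` {0..}))"
    unfolding red_lin_stable_def using D has_derivative_unique[OF D] by metis
  also have "\<dots> \<longleftrightarrow> k1 > 0" by (rule Mlin_iff[OF m0 k20])
  also have "\<dots> \<longleftrightarrow> N > 3 * s" unfolding k1_def using assms(1) by (simp add: field_simps)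
  also have "\<dots> \<longleftrightarrow> s < (1/3) powr (3/2)" using powr_cond[OF A(2) A(3)] by simp
  finally show "red_lin_stable (ang_mom x y 0) (\<xi>, \<eta>, 0, 0) \<longleftrightarrow> s < (1/3) powr (3/2)" unfolding L_def .
qed

end
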